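(* Under the setting of Lemma 1 (a finite point set $P=\{p_1<\dots<p_n\}\subset\mathbb{R}$, a finite set $S'$ of intervals with no endpoint in $P$ such that each gap $(p_{i-1},p_i)$, $2\le i\le n$, contains an endpoint of some interval of $S'$; $Q_0$ the set of points of $P$ contained in no interval of $S'$; $Q_1,\dots,Q_k$ the sets of at least two points of $P\setminus Q_0$ sharing the same code with respect to $S'$), for a nonempty $Q_i$ let $I(Q_i)$ denote the closed interval from the smallest to the largest point of $Q_i$. Then for any two distinct nonempty sets $Q_i,Q_j$ ($i,j\in\{0,\dots,k\}$), either $I(Q_i)\cap I(Q_j)=\emptyset$, or one of them, say $I(Q_j)$, lies strictly between two consecutive points of the other set $Q_i$ (consecutive in the order of $Q_i$).
   Context: The code of a point $p$ with respect to a set $S'$ of intervals is $\{s\in S': p\in s\}$. *)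

theory Defs
  imports Complex_Main
begin

text \<open>An interval of the real line is represented by the pair (a, b) of its endpoints,
  a \<le> b. Since no endpoint lies in P, open/closed is irrelevant for membership of
  points of P; we use the closed interval.\<close>

definition in_ival :: "real \<Rightarrow> real \<times> real \<Rightarrow> bool" where
  "in_ival p s \<longleftrightarrow> fst s \<le> p \<and> p \<le> snd s"

definition code :: "(real \<times> real) set \<Rightarrow> real \<Rightarrow> (real \<times> real) set" where
  "code S p = {s \<in> S. in_ival p s}"

definition endpoints :: "(real \<times> real) set \<Rightarrow> real set" where
  "endpoints S = fst ` S \<union> snd ` S"

definition lemma1_setting :: "real set \<Rightarrow> (real \<times> real) set \<Rightarrow> bool" where
  "lemma1_setting P S \<longleftrightarrow>
     finite P \<and> finite S \<and> (\<forall>s\<in>S. fst s \<le> snd s) \<and>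
     endpoints S \<inter> P = {} \<and>
     (\<forall>p\<in>P. \<forall>q\<in>P. p < q \<and> (\<forall>r\<in>P. \<not> (p < r \<and> r < q)) \<longrightarrow>
        (\<exists>e\<in>endpoints S. p < e \<and> e < q))"

definition Q0 :: "real set \<Rightarrow> (real \<times> real) set \<Rightarrow> real set" where
  "Q0 P S = {p \<in> P. code S p = {}}"

definition Qclasses :: "real set \<Rightarrow> (real \<times> real) set \<Rightarrow> real set set" where
  "Qclasses P S = {C. \<exists>p \<in> P - Q0 P S. C = {q \<in> P - Q0 P S. code S q = code S p} \<and> card C \<ge> 2}"

definition Qfamily :: "real set \<Rightarrow> (real \<times> real) set \<Rightarrow> real set set" where
  "Qfamily P S = insert (Q0 P S) (Qclasses P S)"

definition hull_ival :: "real set \<Rightarrow> real set" where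
  "hull_ival Q = {Min Q .. Max Q}"

definition between_consec :: "real set \<Rightarrow> real set \<Rightarrow> bool" where
  "between_consec B A \<longleftrightarrow> (\<exists>a1\<in>A. \<exists>a2\<in>A. a1 < a2 \<and> (\<forall>a\<in>A. \<not> (a1 < a \<and> a < a2)) \<and>
      hull_ival B \<subseteq> {a1<..<a2})"

end

theory Submission
  imports Defs
begin

lemma conv_code:
  assumes "p \<le> r" "r \<le> q" "code S p = c" "code S q = c"
  shows "c \<subseteq> code S r"
proof
  fix s assume "s \<in> c"
  hence "s \<in> code S p" "s \<in> code S q" using assms by auto
  thus "s \<in> code S r" using assms(1,2) unfolding code_def in_ival_def by auto
qed

lemma fam_form:
  assumes "A \<in> Qfamily P S"
  shows "\<exists>c. A = {q\<in>P. code S q = c}"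
proof -
  { assume "A = Q0 P S" hence ?thesis unfolding Q0_def by blast }
  moreover
  { assume "A \<in> Qclasses P S"
    then obtain p where p: "p \<in> P - Q0 P S" "A = {q \<in> P - Q0 P S. code S q = code S p}"
      unfolding Qclasses_def by blast
    hence "code S p \<noteq> {}" unfolding Q0_def by auto
    hence "A = {q\<in>P. code S q = code S p}" using p unfolding Q0_def by auto
    hence ?thesis by blast }
  ultimately show ?thesis using assms unfolding Qfamily_def by blast
qed

lemma key:
  assumes fin: "finite P"
    and A: "A = {q\<in>P. code S q = cA}" and B: "B = {q\<in>P. code S q = cB}"
    and ne: "A \<noteq> B" "A \<noteq> {}" "B \<noteq> {}"
    and lt: "Min A < Min B"
    and int: "hull_ival A \<inter> hull_ival B \<noteq> {}"
  shows "between_consec B A"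
proof -
  have fA: "finite A" and fB: "finite B" using fin A B by auto
  define a1 a2 b1 b2 where "a1 = Min A" "a2 = Max A" "b1 = Min B" "b2 = Max B"
  have a1A: "a1 \<in> A" and a2A: "a2 \<in> A" and b1B: "b1 \<in> B" and b2B: "b2 \<in> B"
    using fA fB ne a1_a2_b1_b2_def by auto
  have Ab: "\<And>a. a \<in> A \<Longrightarrow> a1 \<le> a \<and> a \<le> a2" using fA a1_a2_b1_b2_def by auto
  have Bb: "\<And>b. b \<in> B \<Longrightarrow> b1 \<le> b \<and> b \<le> b2" using fB a1_a2_b1_b2_def by auto
  have mA: "\<And>x. x \<in> A \<longleftrightarrow> x \<in> P \<and> code S x = cA" using A by blast
  have mB: "\<And>x. x \<in> B \<longleftrightarrow> x \<in> P \<and> code S x = cB" using B by blast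
  have cAB: "cA \<noteq> cB" using ne A B by auto
  from int obtain t where "t \<in> hull_ival A" "t \<in> hull_ival B" by blast
  hence t: "a1 \<le> t" "t \<le> a2" "b1 \<le> t" "t \<le> b2"
    unfolding hull_ival_def a1_a2_b1_b2_def by auto
  have "b1 \<le> a2" using t by linarith
  have l: "a1 < b1" using lt a1_a2_b1_b2_def by simp
  have c1: "cA \<subseteq> cB"
  proof -
    have "cA \<subseteq> code S b1" using conv_code[of a1 b1 a2 S cA] l \<open>b1 \<le> a2\<close> a1A a2A mA by auto
    moreover have "code S b1 = cB" using b1B mB by blast
    ultimately show ?thesis by simp
  qed
  have noA: "\<And>a. a \<in> A \<Longrightarrow> b1 \<le> a \<Longrightarrow> a \<le> b2 \<Longrightarrow> False"
  proof -
    fix a assume "a \<in> A" "b1 \<le> a" "a \<le> b2"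
    hence "cB \<subseteq> code S a" using conv_code[of b1 a b2 S cB] b1B b2B mB by auto
    hence "cB \<subseteq> cA" using \<open>a \<in> A\<close> mA by auto
    thus False using c1 cAB by auto
  qed
  have "a2 > b2" using noA[OF a2A] \<open>b1 \<le> a2\<close> by fastforce
  define L where "L = {a\<in>A. a < b1}"
  define R where "R = {a\<in>A. a > b2}"
  have "a1 \<in> L" using a1A l L_def by auto
  have "a2 \<in> R" using a2A \<open>a2 > b2\<close> R_def by auto
  have fL: "finite L" and fR: "finite R" using fA L_def R_def by auto
  define x y where "x = Max L" "y = Min R"
  have xL: "x \<in> L" using fL \<open>a1 \<in> L\<close> x_y_def using Max_in by blast
  have yR: "y \<in> R" using fR \<open>a2 \<in> R\<close> x_y_def using Min_in by blast
  have xmax: "\<And>a. a \<in> L \<Longrightarrow> a \<le> x" using fL x_y_def by auto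
  have ymin: "\<And>a. a \<in> R \<Longrightarrow> y \<le> a" using fR x_y_def by auto
  have "b1 \<le> b2" using b1B Bb by auto
  have xA: "x \<in> A" using xL L_def by auto
  have yA: "y \<in> A" using yR R_def by auto
  have xy: "x < y" using xL yR L_def R_def \<open>b1 \<le> b2\<close> by auto
  have gap: "\<forall>a\<in>A. \<not> (x < a \<and> a < y)"
  proof (intro ballI notI)
    fix a assume aA: "a \<in> A" and h: "x < a \<and> a < y"
    show False
    proof (cases "a < b1")
      case True thus False using xmax[of a] aA L_def h by auto
    next
      case False
      show False
      proof (cases "a > b2")
        case True thus False using ymin[of a] aA R_def h by auto
      next
        case F2: False
        show False using noA[OF aA] False F2 by linarith
      qed
    qed
  qed
  have hb: "hull_ival B \<subseteq> {x<..<y}"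
    unfolding hull_ival_def using xL yR L_def R_def a1_a2_b1_b2_def by auto
  show ?thesis unfolding between_consec_def using xA yA xy gap hb by blast
qed

theorem lemma2:
  fixes P :: "real set" and S :: "(real \<times> real) set" and A B :: "real set"
  assumes "lemma1_setting P S"
    and "A \<in> Qfamily P S" and "B \<in> Qfamily P S"
    and "A \<noteq> B" and "A \<noteq> {}" and "B \<noteq> {}"
  shows "hull_ival A \<inter> hull_ival B = {} \<or> between_consec B A \<or> between_consec A B"
proof -
  have fin: "finite P" using assms(1) unfolding lemma1_setting_def by blast
  from fam_form[OF assms(2)] obtain cA where A: "A = {q\<in>P. code S q = cA}" ..
  from fam_form[OF assms(3)] obtain cB where B: "B = {q\<in>P. code S q = cB}" ..
  have fA: "finite A" and fB: "finite B" using fin A B by auto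
  have mA: "Min A \<in> A" using fA assms(5) by (rule Min_in)
  have mB: "Min B \<in> B" using fB assms(6) by (rule Min_in)
  have "Min A \<noteq> Min B"
  proof
    assume e: "Min A = Min B"
    have "code S (Min A) = cA" using mA A by blast
    moreover have "code S (Min A) = cB" using mB B e by simp
    ultimately have "cA = cB" by simp
    thus False using A B assms(4) by simp
  qed
  show ?thesis
  proof (cases "hull_ival A \<inter> hull_ival B = {}")
    case False
    show ?thesis
    proof (cases "Min A < Min B")
      case True
      have "between_consec B A" using key[OF fin A B assms(4-6) True False] .
      thus ?thesis by blast
    next
      case F: False
      hence lt: "Min B < Min A" using \<open>Min A \<noteq> Min B\<close> by linarith
      have ne: "B \<noteq> A" using assms(4) by blast
      have "hull_ival B \<inter> hull_ival A \<noteq> {}" using False by blast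
      hence "between_consec A B" using key[OF fin B A ne assms(6) assms(5) lt] by blast
      thus ?thesis by blast
    qed
  qed blast
qed

end
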